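(* In the setting of the cyclic BCD algorithm for the group LASSO problem $\min \Phi$ described below, for any $\epsilon>0$ the total number of arithmetic operations needed by the algorithm to reach an iterate with $\Gamma^{(t)}-\Gamma^\ast\le\epsilon$ is $\mathcal{O}\big((L+\tau_{\max})\tau_{\max}MN/\epsilon\big)$, where the hidden constant does not depend on $\epsilon$ (each block update costs $\mathcal{O}((L+\tau_{\max})M)$ operations when the residual $\mathbf{Y}-\sqrt{p}\sum_{n,\tau}\mathbf{a}^{\rm ext}_{n,\tau}\mathbf{x}_{n,\tau}^T$ is maintained and updated incrementally).
   Context: Let $N,L,M\ge1$, $\tau_{\max}\ge1$ be integers, $p>0$, $\rho>0$, $\mathbf{Y}\in\mathbb{C}^{(L+\tau_{\max})\times M}$. For $n=1,\ldots,N$, $\mathbf{a}_n=[a_{n,1},\ldots,a_{n,L}]^T$ with $|a_{n,l}|=1$, and for $\tau=0,\ldots,\tau_{\max}$, $\mathbf{a}^{\rm ext}_{n,\tau}\in\mathbb{C}^{L+\tau_{\max}}$ is $\mathbf{a}_n$ preceded by $\tau$ zeros and followed by $\tau_{\max}-\tau$ zeros. The objective is $\Phi(\{\mathbf{x}_{n,\tau}\})=\tfrac12\|\mathbf{Y}-\sqrt{p}\sum_{n,\tau}\mathbf{a}^{\rm ext}_{n,\tau}\mathbf{x}_{n,\tau}^T\|_F^2+\rho\sum_{n,\tau}\|\mathbf{x}_{n,\tau}\|_2$ over $\mathbf{x}_{n,\tau}\in\mathbb{C}^M$, with optimal value $\Gamma^\ast$. The algorithm starts from all $\mathbf{x}_{n,\tau}=\mathbf{0}$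 and, in each outer iteration, visits the $(\tau_{\max}+1)N$ blocks once in lexicographic order, replacing the visited block $\mathbf{x}_{\bar n,\bar\tau}$ by its exact block minimizer: with $\tilde{\mathbf{Y}}_{\bar n,\bar\tau}=\mathbf{Y}-\sqrt{p}\sum_{(n,\tau)\ne(\bar n,\bar\tau)}\mathbf{a}^{\rm ext}_{n,\tau}\mathbf{x}_{n,\tau}^T$ and $\mathbf{u}=(\mathbf{a}^{\rm ext}_{\bar n,\bar\tau})^H\tilde{\mathbf{Y}}_{\bar n,\bar\tau}$, set $\mathbf{x}_{\bar n,\bar\tau}^T=\big(\frac{1}{L\sqrt p}-\frac{\rho}{Lp\|\mathbf{u}\|_2}\big)\mathbf{u}$ if $\|\mathbf{u}\|_2>\rho/\sqrt p$ and $\mathbf{0}$ otherwise. $\Gamma^{(t)}$ is the value of $\Phi$ after the $t$-th outer iteration. *)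

theory Defs
  imports "HOL-Analysis.Analysis"
begin

text \<open>Conventions (0-based indices): rows i < L + tmax, columns m < M,
  users n < N, delays tau \<le> tmax, pilot entries l < L.
  Y :: nat \<Rightarrow> nat \<Rightarrow> complex  (Y i m),
  a :: nat \<Rightarrow> nat \<Rightarrow> complex  (a n l),
  x :: nat \<Rightarrow> nat \<Rightarrow> nat \<Rightarrow> complex  (x n tau m = m-th entry of block x_{n,tau}).\<close>

definition a_ext :: "nat \<Rightarrow> (nat \<Rightarrow> nat \<Rightarrow> complex) \<Rightarrow> nat \<Rightarrow> nat \<Rightarrow> nat \<Rightarrow> complex" where
  "a_ext L a n tau i = (if tau \<le> i \<and> i < tau + L then a n (i - tau) else 0)"

definition Phi :: "nat \<Rightarrow> nat \<Rightarrow> nat \<Rightarrow> nat \<Rightarrow> real \<Rightarrow> real \<Rightarrow> (nat \<Rightarrow> nat \<Rightarrow> complex)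
    \<Rightarrow> (nat \<Rightarrow> nat \<Rightarrow> complex) \<Rightarrow> (nat \<Rightarrow> nat \<Rightarrow> nat \<Rightarrow> complex) \<Rightarrow> real" where
  "Phi N L M tmax p \<rho> Y a x =
     (1/2) * (\<Sum>i<L + tmax. \<Sum>m<M.
        (cmod (Y i m - complex_of_real (sqrt p) *
           (\<Sum>n<N. \<Sum>tau\<le>tmax. a_ext L a n tau i * x n tau m)))\<^sup>2)
     + \<rho> * (\<Sum>n<N. \<Sum>tau\<le>tmax. sqrt (\<Sum>m<M. (cmod (x n tau m))\<^sup>2))"

definition Gamma_opt :: "nat \<Rightarrow> nat \<Rightarrow> nat \<Rightarrow> nat \<Rightarrow> real \<Rightarrow> real \<Rightarrow> (nat \<Rightarrow> nat \<Rightarrow> complex)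
    \<Rightarrow> (nat \<Rightarrow> nat \<Rightarrow> complex) \<Rightarrow> real" where
  "Gamma_opt N L M tmax p \<rho> Y a = (INF x. Phi N L M tmax p \<rho> Y a x)"

text \<open>Exact block minimizer update of block (nb, tb).\<close>
definition block_update :: "nat \<Rightarrow> nat \<Rightarrow> nat \<Rightarrow> nat \<Rightarrow> real \<Rightarrow> real \<Rightarrow> (nat \<Rightarrow> nat \<Rightarrow> complex)
    \<Rightarrow> (nat \<Rightarrow> nat \<Rightarrow> complex) \<Rightarrow> (nat \<Rightarrow> nat \<Rightarrow> nat \<Rightarrow> complex) \<Rightarrow> nat \<times> nat
    \<Rightarrow> (nat \<Rightarrow> nat \<Rightarrow> nat \<Rightarrow> complex)" where
  "block_update N L M tmax p \<rho> Y a x blk =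
     (let nb = fst blk; tb = snd blk;
          Yt = (\<lambda>i m. Y i m - complex_of_real (sqrt p) *
                 (\<Sum>n<N. \<Sum>tau\<le>tmax. if (n, tau) = (nb, tb) then 0
                                      else a_ext L a n tau i * x n tau m));
          u = (\<lambda>m. \<Sum>i<L + tmax. cnj (a_ext L a nb tb i) * Yt i m);
          nu = sqrt (\<Sum>m<M. (cmod (u m))\<^sup>2);
          newblk = (\<lambda>m. if m < M \<and> nu > \<rho> / sqrt p
                        then complex_of_real (1 / (real L * sqrt p) - \<rho> / (real L * p * nu)) * u m
                        else 0)
      in x(nb := (x nb)(tb := newblk)))"

definition blocks :: "nat \<Rightarrow> nat \<Rightarrow> (nat \<times> nat) list" where
  "blocks N tmax = concat (map (\<lambda>n. map (\<lambda>tau. (n, tau)) [0..<Suc tmax]) [0..<N])"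

definition outer_iter :: "nat \<Rightarrow> nat \<Rightarrow> nat \<Rightarrow> nat \<Rightarrow> real \<Rightarrow> real \<Rightarrow> (nat \<Rightarrow> nat \<Rightarrow> complex)
    \<Rightarrow> (nat \<Rightarrow> nat \<Rightarrow> complex) \<Rightarrow> (nat \<Rightarrow> nat \<Rightarrow> nat \<Rightarrow> complex) \<Rightarrow> (nat \<Rightarrow> nat \<Rightarrow> nat \<Rightarrow> complex)" where
  "outer_iter N L M tmax p \<rho> Y a x = foldl (block_update N L M tmax p \<rho> Y a) x (blocks N tmax)"

definition iterate :: "nat \<Rightarrow> nat \<Rightarrow> nat \<Rightarrow> nat \<Rightarrow> real \<Rightarrow> real \<Rightarrow> (nat \<Rightarrow> nat \<Rightarrow> complex)
    \<Rightarrow> (nat \<Rightarrow> nat \<Rightarrow> complex) \<Rightarrow> nat \<Rightarrow> (nat \<Rightarrow> nat \<Rightarrow> nat \<Rightarrow> complex)" where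
  "iterate N L M tmax p \<rho> Y a t = (outer_iter N L M tmax p \<rho> Y a ^^ t) (\<lambda>_ _ _. 0)"

definition Gamma :: "nat \<Rightarrow> nat \<Rightarrow> nat \<Rightarrow> nat \<Rightarrow> real \<Rightarrow> real \<Rightarrow> (nat \<Rightarrow> nat \<Rightarrow> complex)
    \<Rightarrow> (nat \<Rightarrow> nat \<Rightarrow> complex) \<Rightarrow> nat \<Rightarrow> real" where
  "Gamma N L M tmax p \<rho> Y a t = Phi N L M tmax p \<rho> Y a (iterate N L M tmax p \<rho> Y a t)"

text \<open>Cost model: each block update (with incrementally maintained residual)
  costs (L + tmax) M arithmetic operations, as stated in the paper; an outer
  iteration visits (tmax+1) N blocks.\<close>
definition block_update_ops :: "nat \<Rightarrow> nat \<Rightarrow> nat \<Rightarrow> nat" where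
  "block_update_ops L M tmax = (L + tmax) * M"

definition total_ops :: "nat \<Rightarrow> nat \<Rightarrow> nat \<Rightarrow> nat \<Rightarrow> nat \<Rightarrow> nat" where
  "total_ops N L M tmax t = t * ((Suc tmax) * N) * block_update_ops L M tmax"

end

theory Submission
  imports Defs
begin

lemma rec_key:
  fixes W q n :: real
  assumes "W > 0" "q * W \<ge> 2" "n \<ge> 1"
  shows "W / n \<le> W / (n+1) + q * (W / (n+1))\<^sup>2"
proof -
  have "q * (W / (n+1))\<^sup>2 = (q * W) * (W / (n+1)^2)" by (simp add: power2_eq_square)
  also have "\<dots> \<ge> 2 * (W / (n+1)^2)" using assms by (intro mult_right_mono) auto
  finally have h: "q * (W / (n+1))\<^sup>2 \<ge> 2 * W / (n+1)^2" by simp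
  have "W / n - W / (n+1) = W / (n * (n+1))" using assms by (simp add: field_simps)
  also have "\<dots> \<le> 2 * W / (n+1)^2"
  proof -
    have "W * (n+1)^2 \<le> 2 * W * (n * (n+1))"
    proof -
      have "n + 1 \<le> 2 * n" using assms by linarith
      then have "(n+1) * (n+1) \<le> (2 * n) * (n+1)" using assms by (intro mult_right_mono) auto
      then have "(n+1)^2 \<le> 2 * (n * (n+1))" by (simp add: power2_eq_square mult.assoc)
      then have "W * (n+1)^2 \<le> W * (2 * (n * (n+1)))" using assms by (intro mult_left_mono) auto
      then show ?thesis by (simp add: mult.assoc mult.left_commute)
    qed
    moreover have "n * (n+1) > 0" "(n+1)^2 > 0" using assms by auto
    ultimately show ?thesis by (simp add: divide_simps mult.commute)
  qed
  finally show ?thesis using h by linarith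
qed

lemma rec_rate:
  fixes a :: "nat \<Rightarrow> real" and q :: real
  assumes nn: "\<And>k. a k \<ge> 0" and q: "q > 0" and st: "\<And>k. a k - a (Suc k) \<ge> q * (a (Suc k))\<^sup>2"
  defines "W \<equiv> max (a 0) (2 / q)"
  shows "a k \<le> W / (real k + 1)"
proof (induction k)
  case 0 then show ?case by (simp add: W_def)
next
  case (Suc k)
  have Wp: "W > 0" unfolding W_def using q by (simp add: less_max_iff_disj)
  have "2 / q \<le> W" unfolding W_def by simp
  then have "q * (2 / q) \<le> q * W" using q by (intro mult_left_mono) auto
  then have qW: "q * W \<ge> 2" using q by simp
  show ?case
  proof (rule ccontr)
    assume "\<not> a (Suc k) \<le> W / (real (Suc k) + 1)"
    then have gt: "a (Suc k) > W / (real k + 2)" by (simp add: add.commute)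
    define t where "t = W / (real k + 2)"
    have t0: "t \<ge> 0" using Wp by (simp add: t_def)
    have "q * t\<^sup>2 \<le> q * (a (Suc k))\<^sup>2" using gt t0 q unfolding t_def[symmetric]
      by (intro mult_left_mono power_mono) auto
    then have "t + q * t\<^sup>2 < a k" using st[of k] gt unfolding t_def[symmetric] by linarith
    moreover have "W / (real k + 1) \<le> t + q * t\<^sup>2"
      using rec_key[OF Wp qW, of "real k + 1"] unfolding t_def by (simp add: add.assoc)
    ultimately show False using Suc.IH by linarith
  qed
qed


locale bcd =
  fixes N L M tmax :: nat and p \<rho> :: real and Y a :: "nat \<Rightarrow> nat \<Rightarrow> complex"
  assumes N1: "N \<ge> 1" and L1: "L \<ge> 1" and M1: "M \<ge> 1" and T1: "tmax \<ge> 1"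
    and pp: "p > 0" and rp: "\<rho> > 0"
    and amod: "\<And>n l. n < N \<Longrightarrow> l < L \<Longrightarrow> cmod (a n l) = 1"
begin

definition "s = sqrt p"
definition "S = {..<N} \<times> {..tmax}"
definition "ae b i = a_ext L a (fst b) (snd b) i"
definition "R x i m = Y i m - complex_of_real s * (\<Sum>b\<in>S. ae b i * x (fst b) (snd b) m)"
definition "ff x = 1/2 * (\<Sum>i<L+tmax. \<Sum>m<M. (cmod (R x i m))\<^sup>2)"
definition "nrm v = sqrt (\<Sum>m<M. (cmod (v m))\<^sup>2)"
definition "gg x = \<rho> * (\<Sum>b\<in>S. nrm (x (fst b) (snd b)))"
definition "G x b m = - complex_of_real s * (\<Sum>i<L+tmax. cnj (ae b i) * R x i m)"
definition "ip g d = (\<Sum>m<M. Re (cnj (g m) * d m))"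

lemma finS: "finite S" by (simp add: S_def)

lemma s_sq: "s * s = p" using pp by (simp add: s_def)
lemma s_pos: "s > 0" using pp by (simp add: s_def)

lemma Phi_eq: "Phi N L M tmax p \<rho> Y a x = ff x + gg x"
  unfolding Phi_def ff_def gg_def R_def nrm_def S_def ae_def s_def
  by (simp add: sum.cartesian_product case_prod_beta)

lemma ae_bound: "b \<in> S \<Longrightarrow> cmod (ae b i) \<le> 1"
  using amod unfolding ae_def a_ext_def S_def by auto

lemma ae_sum: assumes "b \<in> S" shows "(\<Sum>i<L+tmax. (cmod (ae b i))\<^sup>2) = real L"
proof -
  obtain n tau where b: "b = (n,tau)" "n < N" "tau \<le> tmax" using assms by (auto simp: S_def)
  have "(\<Sum>i<L+tmax. (cmod (ae b i))\<^sup>2) = (\<Sum>i<L+tmax. if i \<in> {tau..<tau+L} then 1 else 0)"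
    using b amod by (intro sum.cong) (auto simp: ae_def a_ext_def)
  also have "\<dots> = real (card ({..<L+tmax} \<inter> {tau..<tau+L}))"
    by (auto simp: sum.If_cases intro!: arg_cong[where f=card])
  also have "{..<L+tmax} \<inter> {tau..<tau+L} = {tau..<tau+L}" using b by auto
  finally show ?thesis by simp
qed


lemma cmod_diff_sq: "(cmod (z - w))\<^sup>2 = (cmod z)\<^sup>2 - 2 * Re (cnj z * w) + (cmod w)\<^sup>2"
  by (simp only: cmod_power2) (simp add: power2_eq_square algebra_simps)

lemma CS: "(\<Sum>m<M. Re (cnj (u m) * v m)) \<le> nrm u * nrm v"
proof -
  have "(\<Sum>m<M. Re (cnj (u m) * v m)) \<le> (\<Sum>m<M. \<bar>cmod (u m)\<bar> * \<bar>cmod (v m)\<bar>)"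
    by (intro sum_mono) (metis abs_norm_cancel complex_Re_le_cmod complex_mod_cnj norm_mult)
  also have "\<dots> \<le> L2_set (\<lambda>m. cmod (u m)) {..<M} * L2_set (\<lambda>m. cmod (v m)) {..<M}"
    by (rule L2_set_mult_ineq)
  finally show ?thesis by (simp add: nrm_def L2_set_def real_sqrt_mult[symmetric])
qed

lemma nrm_nonneg: "nrm v \<ge> 0" by (simp add: nrm_def sum_nonneg)

lemma foc_alg:
  fixes u v :: "nat \<Rightarrow> complex"
  defines "w \<equiv> (\<lambda>m. if m < M \<and> nrm u > \<rho> / s
      then complex_of_real (1 / (real L * s) - \<rho> / (real L * p * nrm u)) * u m else 0)"
  shows "(\<Sum>m<M. Re (cnj (complex_of_real (p * real L) * w m - complex_of_real s * u m) * (v m - w m)))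
          + \<rho> * (nrm v - nrm w) \<ge> 0"
proof (cases "nrm u > \<rho> / s")
  case True
  define \<nu> where "\<nu> = nrm u"
  define c where "c = 1 / (real L * s) - \<rho> / (real L * p * \<nu>)"
  have sp: "s > 0" "p > 0" "\<rho> > 0" "real L > 0" using s_pos pp rp L1 by auto
  have nupos: "\<nu> > 0" using True sp \<nu>_def by (smt (verit) divide_pos_pos)
  have cval: "c = (s * \<nu> - \<rho>) / (real L * p * \<nu>)"
    unfolding c_def using sp nupos s_sq by (simp add: field_simps)
  have c0: "c \<ge> 0" unfolding cval using True sp nupos by (simp add: field_simps \<nu>_def mult.commute)
  have pLc: "p * real L * c - s = - \<rho> / \<nu>"
    unfolding cval using sp nupos s_sq by (simp add: field_simps)
  have wm: "\<And>m. m < M \<Longrightarrow> w m = complex_of_real c * u m" using True unfolding w_def c_def \<nu>_def by simp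
  have nw: "nrm w = c * \<nu>"
  proof -
    have "nrm w = sqrt (\<Sum>m<M. c\<^sup>2 * (cmod (u m))\<^sup>2)"
      unfolding nrm_def by (intro arg_cong[where f=sqrt] sum.cong) (auto simp: wm norm_mult power_mult_distrib abs_of_nonneg c0)
    also have "\<dots> = c * \<nu>" using c0 by (simp add: sum_distrib_left[symmetric] real_sqrt_mult \<nu>_def nrm_def)
    finally show ?thesis .
  qed
  have usq: "(\<Sum>m<M. (cmod (u m))\<^sup>2) = \<nu>\<^sup>2" unfolding \<nu>_def nrm_def by (simp add: sum_nonneg)
  have "(\<Sum>m<M. Re (cnj (complex_of_real (p * real L) * w m - complex_of_real s * u m) * (v m - w m)))
      = (\<Sum>m<M. (p * real L * c - s) * (Re (cnj (u m) * v m) - c * (cmod (u m))\<^sup>2))"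
  proof (intro sum.cong refl)
    fix m assume "m \<in> {..<M}"
    then have "w m = complex_of_real c * u m" using wm by simp
    then show "Re (cnj (complex_of_real (p * real L) * w m - complex_of_real s * u m) * (v m - w m))
      = (p * real L * c - s) * (Re (cnj (u m) * v m) - c * (cmod (u m))\<^sup>2)"
      by (simp only: cmod_power2) (simp add: power2_eq_square algebra_simps)
  qed
  also have "\<dots> = (p * real L * c - s) * ((\<Sum>m<M. Re (cnj (u m) * v m)) - c * \<nu>\<^sup>2)"
    by (simp add: sum_subtractf sum_distrib_left[symmetric] usq)
  finally have eq: "(\<Sum>m<M. Re (cnj (complex_of_real (p * real L) * w m - complex_of_real s * u m) * (v m - w m)))
     = - \<rho> / \<nu> * ((\<Sum>m<M. Re (cnj (u m) * v m)) - c * \<nu>\<^sup>2)" by (simp add: pLc)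
  have cs: "(\<Sum>m<M. Re (cnj (u m) * v m)) \<le> \<nu> * nrm v" using CS \<nu>_def by simp
  have "\<rho> / \<nu> * (\<Sum>m<M. Re (cnj (u m) * v m)) \<le> \<rho> / \<nu> * (\<nu> * nrm v)"
    using cs sp nupos by (intro mult_left_mono) auto
  also have "\<dots> = \<rho> * nrm v" using nupos by simp
  finally have "\<rho> / \<nu> * (\<Sum>m<M. Re (cnj (u m) * v m)) \<le> \<rho> * nrm v" .
  moreover have "\<rho> / \<nu> * (c * \<nu>\<^sup>2) = \<rho> * (c * \<nu>)" using nupos by (simp add: power2_eq_square)
  ultimately show ?thesis unfolding eq nw by (simp add: algebra_simps)
next
  case False
  have w0: "\<And>m. w m = 0" using False unfolding w_def by simp
  have nw: "nrm w = 0" by (simp add: nrm_def w0)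
  have cs: "(\<Sum>m<M. Re (cnj (u m) * v m)) \<le> nrm u * nrm v" by (rule CS)
  have "s * (nrm u * nrm v) \<le> \<rho> * nrm v"
  proof -
    have "s * nrm u \<le> \<rho>" using False s_pos by (simp add: field_simps)
    then show ?thesis using nrm_nonneg[of v] by (metis mult.assoc mult_right_mono)
  qed
  moreover have "s * (\<Sum>m<M. Re (cnj (u m) * v m)) \<le> s * (nrm u * nrm v)"
    using cs s_pos by simp
  moreover have "(\<Sum>m<M. Re (cnj (complex_of_real (p * real L) * w m - complex_of_real s * u m) * (v m - w m)))
     = - s * (\<Sum>m<M. Re (cnj (u m) * v m))"
    by (simp add: w0 sum_distrib_left sum_negf[symmetric] algebra_simps)
  ultimately show ?thesis unfolding nw by (smt (verit) mult_minus_left)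
qed


abbreviation blk :: "(nat \<Rightarrow> nat \<Rightarrow> nat \<Rightarrow> complex) \<Rightarrow> nat \<times> nat \<Rightarrow> nat \<Rightarrow> complex"
  where "blk x b \<equiv> x (fst b) (snd b)"

definition "D x y i m = complex_of_real s * (\<Sum>b\<in>S. ae b i * (blk y b m - blk x b m))"
definition "Q x y = 1/2 * (\<Sum>i<L+tmax. \<Sum>m<M. (cmod (D x y i m))\<^sup>2)"

lemma R_diff: "R y i m = R x i m - D x y i m"
  by (simp add: R_def D_def sum_subtractf right_diff_distrib algebra_simps)

lemma cross: "(\<Sum>i<L+tmax. \<Sum>m<M. Re (cnj (R x i m) * D x y i m))
    = - (\<Sum>b\<in>S. ip (G x b) (\<lambda>m. blk y b m - blk x b m))"
proof -
  define T where "T b i m = s * Re (ae b i * cnj (R x i m) * (blk y b m - blk x b m))" for b i m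
  have c1: "(\<Sum>i<L+tmax. \<Sum>m<M. Re (cnj (R x i m) * D x y i m)) = (\<Sum>i<L+tmax. \<Sum>m<M. \<Sum>b\<in>S. T b i m)"
    by (simp add: D_def T_def sum_distrib_left algebra_simps)
  have c2: "(\<Sum>b\<in>S. ip (G x b) (\<lambda>m. blk y b m - blk x b m)) = - (\<Sum>b\<in>S. \<Sum>m<M. \<Sum>i<L+tmax. T b i m)"
    by (simp add: ip_def G_def T_def sum_distrib_left sum_distrib_right sum_negf[symmetric] algebra_simps)
  have c3: "(\<Sum>i<L+tmax. \<Sum>m<M. \<Sum>b\<in>S. T b i m) = (\<Sum>b\<in>S. \<Sum>m<M. \<Sum>i<L+tmax. T b i m)"
  proof -
    have "(\<Sum>i<L+tmax. \<Sum>m<M. \<Sum>b\<in>S. T b i m) = (\<Sum>m<M. \<Sum>i<L+tmax. \<Sum>b\<in>S. T b i m)"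
      by (rule sum.swap)
    also have "\<dots> = (\<Sum>m<M. \<Sum>b\<in>S. \<Sum>i<L+tmax. T b i m)"
      by (intro sum.cong refl sum.swap)
    also have "\<dots> = (\<Sum>b\<in>S. \<Sum>m<M. \<Sum>i<L+tmax. T b i m)"
      by (rule sum.swap)
    finally show ?thesis .
  qed
  show ?thesis using c1 c2 c3 by simp
qed

lemma f_expand: "ff y = ff x + (\<Sum>b\<in>S. ip (G x b) (\<lambda>m. blk y b m - blk x b m)) + Q x y"
proof -
  have "ff y = 1/2 * (\<Sum>i<L+tmax. \<Sum>m<M. (cmod (R x i m))\<^sup>2 - 2 * Re (cnj (R x i m) * D x y i m) + (cmod (D x y i m))\<^sup>2)"
    unfolding ff_def by (simp only: R_diff[where y=y and x=x] cmod_diff_sq)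
  also have "\<dots> = ff x - (\<Sum>i<L+tmax. \<Sum>m<M. Re (cnj (R x i m) * D x y i m)) + Q x y"
    by (simp add: ff_def Q_def sum.distrib sum_subtractf sum_distrib_left[symmetric] algebra_simps)
  finally show ?thesis using cross by simp
qed

lemma Q_nonneg: "Q x y \<ge> 0" by (simp add: Q_def sum_nonneg)


lemma sum_single: "finite A \<Longrightarrow> b \<in> A \<Longrightarrow> (\<And>x. x \<in> A \<Longrightarrow> x \<noteq> b \<Longrightarrow> f x = 0) \<Longrightarrow> sum f A = f b"
  by (metis (mono_tags, lifting) sum.remove sum.neutral DiffE insertI1 add.right_neutral)

definition "Yt x b i m = Y i m - complex_of_real s * (\<Sum>b'\<in>S. if b' = b then 0 else ae b' i * blk x b' m)"
definition "uu x b m = (\<Sum>i<L+tmax. cnj (ae b i) * Yt x b i m)"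
definition "nb x b m = (if m < M \<and> nrm (uu x b) > \<rho> / s
   then complex_of_real (1/(real L * s) - \<rho>/(real L * p * nrm (uu x b))) * uu x b m else 0)"
definition "upd = block_update N L M tmax p \<rho> Y a"
definition "PP = Phi N L M tmax p \<rho> Y a"

lemma upd_eq: "upd x b = x(fst b := (x (fst b))(snd b := nb x b))"
proof -
  have e: "(\<Sum>n<N. \<Sum>tau\<le>tmax. if (n, tau) = (fst b, snd b) then 0 else a_ext L a n tau i * x n tau m)
     = (\<Sum>b'\<in>S. if b' = b then 0 else ae b' i * blk x b' m)" for i m
    unfolding S_def ae_def by (simp add: sum.cartesian_product case_prod_beta prod_eq_iff)
  show ?thesis
    unfolding upd_def block_update_def Let_def e unfolding nb_def uu_def Yt_def nrm_def s_def ae_def ..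
qed

lemma upd_blk: "blk (upd x b) b = nb x b" by (simp add: upd_eq)
lemma upd_other: "b' \<noteq> b \<Longrightarrow> blk (upd x b) b' = blk x b'"
  by (cases b; cases b') (auto simp: upd_eq)
lemma upd_other': "(n, tau) \<noteq> b \<Longrightarrow> upd x b n tau = x n tau"
  using upd_other[of "(n,tau)" b x] by simp

lemma R_Yt: assumes "b \<in> S" shows "R x i m = Yt x b i m - complex_of_real s * ae b i * blk x b m"
proof -
  let ?f = "\<lambda>b'. ae b' i * blk x b' m"
  have "(\<Sum>b'\<in>S. ?f b') = (\<Sum>b'\<in>S. (if b' = b then 0 else ?f b') + (if b' = b then ?f b' else 0))"
    by (intro sum.cong) auto
  also have "\<dots> = (\<Sum>b'\<in>S. if b' = b then 0 else ?f b') + ?f b"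
    using assms finS by (simp add: sum.distrib)
  finally show ?thesis by (simp add: R_def Yt_def algebra_simps)
qed

lemma Yt_indep: "(\<And>b'. b' \<in> S \<Longrightarrow> b' \<noteq> b \<Longrightarrow> blk y b' = blk x b') \<Longrightarrow> Yt y b = Yt x b"
  unfolding Yt_def by (intro ext) (auto intro!: sum.cong)

lemma ae_csum: "b \<in> S \<Longrightarrow> (\<Sum>i<L+tmax. cnj (ae b i) * ae b i) = complex_of_real (real L)"
proof -
  assume b: "b \<in> S"
  have "(\<Sum>i<L+tmax. cnj (ae b i) * ae b i) = (\<Sum>i<L+tmax. complex_of_real ((cmod (ae b i))\<^sup>2))"
    by (intro sum.cong refl) (metis complex_norm_square mult.commute)
  also have "\<dots> = complex_of_real (\<Sum>i<L+tmax. (cmod (ae b i))\<^sup>2)" by simp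
  finally show ?thesis using ae_sum[OF b] by simp
qed

lemma G_upd: assumes b: "b \<in> S"
  shows "G (upd x b) b m = complex_of_real (p * real L) * nb x b m - complex_of_real s * uu x b m"
proof -
  have Yt: "Yt (upd x b) b = Yt x b" by (rule Yt_indep) (simp add: upd_other)
  have "G (upd x b) b m = - complex_of_real s * (\<Sum>i<L+tmax. cnj (ae b i) * Yt x b i m)
      + complex_of_real (s * s) * (\<Sum>i<L+tmax. cnj (ae b i) * ae b i) * nb x b m"
    unfolding G_def R_Yt[OF b, of "upd x b"] Yt upd_blk
    by (simp add: sum_distrib_left sum_distrib_right sum_subtractf sum_negf algebra_simps)
  then show ?thesis using ae_csum[OF b] s_sq by (simp add: uu_def algebra_simps)
qed

lemma foc: assumes b: "b \<in> S"
  shows "ip (G (upd x b) b) (\<lambda>m. v m - blk (upd x b) b m) + \<rho> * (nrm v - nrm (blk (upd x b) b)) \<ge> 0"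
proof -
  have "ip (G (upd x b) b) (\<lambda>m. v m - blk (upd x b) b m) =
    (\<Sum>m<M. Re (cnj (complex_of_real (p * real L) * nb x b m - complex_of_real s * uu x b m) * (v m - nb x b m)))"
    unfolding ip_def upd_blk G_upd[OF b] ..
  then show ?thesis using foc_alg[of "uu x b" v] unfolding upd_blk nb_def[abs_def] by simp
qed


lemma PP_eq: "PP x = ff x + gg x" unfolding PP_def by (rule Phi_eq)

lemma single_change:
  assumes b: "b \<in> S" and oth: "\<And>b'. b' \<in> S \<Longrightarrow> b' \<noteq> b \<Longrightarrow> blk y b' = blk z b'"
  shows "PP y - PP z = ip (G z b) (\<lambda>m. blk y b m - blk z b m) + \<rho> * (nrm (blk y b) - nrm (blk z b))
     + (p * real L / 2) * (\<Sum>m<M. (cmod (blk y b m - blk z b m))\<^sup>2)"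
proof -
  have s1: "(\<Sum>b'\<in>S. ip (G z b') (\<lambda>m. blk y b' m - blk z b' m)) = ip (G z b) (\<lambda>m. blk y b m - blk z b m)"
    by (rule sum_single[OF finS b]) (simp add: oth ip_def)
  have Dz: "D z y i m = complex_of_real s * ae b i * (blk y b m - blk z b m)" for i m
  proof -
    have "(\<Sum>b'\<in>S. ae b' i * (blk y b' m - blk z b' m)) = ae b i * (blk y b m - blk z b m)"
      by (rule sum_single[OF finS b]) (simp add: oth)
    then show ?thesis by (simp add: D_def)
  qed
  have "Q z y = 1/2 * (\<Sum>i<L+tmax. \<Sum>m<M. p * ((cmod (ae b i))\<^sup>2 * (cmod (blk y b m - blk z b m))\<^sup>2))"
    unfolding Q_def Dz using pp by (simp add: norm_mult power_mult_distrib s_def mult.assoc)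
  also have "\<dots> = 1/2 * (\<Sum>m<M. \<Sum>i<L+tmax. p * ((cmod (ae b i))\<^sup>2 * (cmod (blk y b m - blk z b m))\<^sup>2))"
    by (subst sum.swap) simp
  also have "\<dots> = 1/2 * (\<Sum>m<M. p * (\<Sum>i<L+tmax. (cmod (ae b i))\<^sup>2) * (cmod (blk y b m - blk z b m))\<^sup>2)"
    by (simp add: sum_distrib_left sum_distrib_right mult.assoc)
  also have "\<dots> = (p * real L / 2) * (\<Sum>m<M. (cmod (blk y b m - blk z b m))\<^sup>2)"
    by (simp add: ae_sum[OF b] sum_distrib_left mult.assoc)
  finally have q: "Q z y = (p * real L / 2) * (\<Sum>m<M. (cmod (blk y b m - blk z b m))\<^sup>2)" .
  have "gg y - gg z = \<rho> * (\<Sum>b'\<in>S. nrm (blk y b') - nrm (blk z b'))"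
    by (simp add: gg_def sum_subtractf right_diff_distrib)
  also have "(\<Sum>b'\<in>S. nrm (blk y b') - nrm (blk z b')) = nrm (blk y b) - nrm (blk z b)"
    by (rule sum_single[OF finS b]) (simp add: oth)
  finally have g: "gg y - gg z = \<rho> * (nrm (blk y b) - nrm (blk z b))" .
  show ?thesis unfolding PP_eq using f_expand[of y z] s1 q g by simp
qed

lemma decrease: assumes b: "b \<in> S"
  shows "PP x - PP (upd x b) \<ge> (p * real L / 2) * (\<Sum>m<M. (cmod (blk x b m - blk (upd x b) b m))\<^sup>2)"
proof -
  have "PP x - PP (upd x b) = ip (G (upd x b) b) (\<lambda>m. blk x b m - blk (upd x b) b m)
     + \<rho> * (nrm (blk x b) - nrm (blk (upd x b) b))
     + (p * real L / 2) * (\<Sum>m<M. (cmod (blk x b m - blk (upd x b) b m))\<^sup>2)"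
    by (rule single_change[OF b]) (simp add: upd_other)
  then show ?thesis using foc[OF b, of x "blk x b"] by simp
qed

lemma G_diff: assumes b: "b \<in> S"
  shows "cmod (G z b m - G w b m) \<le> p * real (L + tmax) * (\<Sum>b'\<in>S. cmod (blk z b' m - blk w b' m))"
proof -
  have e: "G z b m - G w b m = complex_of_real s * (\<Sum>i<L+tmax. cnj (ae b i) * D w z i m)"
    unfolding G_def R_diff[where y=z and x=w]
    by (simp add: sum_distrib_left sum_subtractf right_diff_distrib sum_negf algebra_simps)
  have Db: "cmod (D w z i m) \<le> s * (\<Sum>b'\<in>S. cmod (blk z b' m - blk w b' m))" for i
  proof -
    have "cmod (\<Sum>b'\<in>S. ae b' i * (blk z b' m - blk w b' m)) \<le> (\<Sum>b'\<in>S. cmod (ae b' i * (blk z b' m - blk w b' m)))"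
      by (rule norm_sum)
    also have "\<dots> \<le> (\<Sum>b'\<in>S. cmod (blk z b' m - blk w b' m))"
      by (intro sum_mono) (simp add: norm_mult ae_bound mult_left_le_one_le)
    finally show ?thesis using s_pos by (simp add: D_def norm_mult)
  qed
  have "cmod (\<Sum>i<L+tmax. cnj (ae b i) * D w z i m) \<le> (\<Sum>i<L+tmax. cmod (cnj (ae b i) * D w z i m))"
    by (rule norm_sum)
  also have "\<dots> \<le> (\<Sum>i<L+tmax. s * (\<Sum>b'\<in>S. cmod (blk z b' m - blk w b' m)))"
  proof (intro sum_mono)
    fix i
    have "cmod (cnj (ae b i) * D w z i m) \<le> cmod (D w z i m)"
      using ae_bound[OF b, of i] by (simp add: norm_mult mult_left_le_one_le)
    then show "cmod (cnj (ae b i) * D w z i m) \<le> s * (\<Sum>b'\<in>S. cmod (blk z b' m - blk w b' m))"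
      using Db[of i] by linarith
  qed
  also have "\<dots> = real (L + tmax) * s * (\<Sum>b'\<in>S. cmod (blk z b' m - blk w b' m))" by simp
  finally have "cmod (\<Sum>i<L+tmax. cnj (ae b i) * D w z i m) \<le> real (L + tmax) * s * (\<Sum>b'\<in>S. cmod (blk z b' m - blk w b' m))" .
  then have "s * cmod (\<Sum>i<L+tmax. cnj (ae b i) * D w z i m) \<le> s * (real (L + tmax) * s * (\<Sum>b'\<in>S. cmod (blk z b' m - blk w b' m)))"
    using s_pos by (intro mult_left_mono) auto
  moreover have "s * (real (L + tmax) * s * X) = p * real (L + tmax) * X" for X
    using s_sq by (metis mult.assoc mult.commute)
  moreover have "cmod (G z b m - G w b m) = s * cmod (\<Sum>i<L+tmax. cnj (ae b i) * D w z i m)"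
    unfolding e using s_pos by (simp add: norm_mult)
  ultimately show ?thesis by metis
qed


lemma fold_other: "(n, tau) \<notin> set bs \<Longrightarrow> foldl upd x bs n tau = x n tau"
proof (induction bs arbitrary: x)
  case Nil then show ?case by simp
next
  case (Cons b bs)
  then have "foldl upd (upd x b) bs n tau = upd x b n tau" by simp
  also have "\<dots> = x n tau" using Cons.prems by (intro upd_other') auto
  finally show ?case by simp
qed

lemma fold_other_blk: "b \<notin> set bs \<Longrightarrow> blk (foldl upd x bs) b = blk x b"
  using fold_other[of "fst b" "snd b" bs x] by simp

lemma fold_dec:
  assumes "distinct bs" "set bs \<subseteq> S"
  shows "PP x - PP (foldl upd x bs) \<ge> (p * real L / 2) *
     (\<Sum>b\<in>set bs. \<Sum>m<M. (cmod (blk (foldl upd x bs) b m - blk x b m))\<^sup>2)"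
  using assms
proof (induction bs arbitrary: x)
  case Nil then show ?case by simp
next
  case (Cons b bs)
  define x1 where "x1 = upd x b"
  define z where "z = foldl upd x1 bs"
  have bS: "b \<in> S" and nb: "b \<notin> set bs" using Cons.prems by auto
  have IH: "PP x1 - PP z \<ge> (p * real L / 2) * (\<Sum>b\<in>set bs. \<Sum>m<M. (cmod (blk z b m - blk x1 b m))\<^sup>2)"
    unfolding z_def using Cons by auto
  have e1: "(\<Sum>b\<in>set bs. \<Sum>m<M. (cmod (blk z b m - blk x1 b m))\<^sup>2)
     = (\<Sum>b\<in>set bs. \<Sum>m<M. (cmod (blk z b m - blk x b m))\<^sup>2)"
    using nb unfolding x1_def by (intro sum.cong refl) (metis upd_other)
  have zb: "blk z b = blk x1 b" unfolding z_def using nb by (rule fold_other_blk)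
  have dec: "PP x - PP x1 \<ge> (p * real L / 2) * (\<Sum>m<M. (cmod (blk z b m - blk x b m))\<^sup>2)"
    using decrease[OF bS, of x] unfolding zb x1_def by (simp add: norm_minus_commute)
  have "foldl upd x (b # bs) = z" by (simp add: z_def x1_def)
  moreover have "(\<Sum>b\<in>set (b # bs). \<Sum>m<M. (cmod (blk z b m - blk x b m))\<^sup>2)
     = (\<Sum>m<M. (cmod (blk z b m - blk x b m))\<^sup>2) + (\<Sum>b\<in>set bs. \<Sum>m<M. (cmod (blk z b m - blk x b m))\<^sup>2)"
    using nb by simp
  ultimately show ?case using IH dec e1 by (simp add: distrib_left)
qed

lemma ip_comb: "ip g (\<lambda>m. z m - y m) + ip h (\<lambda>m. y m - z m) = (\<Sum>m<M. Re (cnj (g m - h m) * (z m - y m)))"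
  unfolding ip_def by (simp add: sum.distrib[symmetric] algebra_simps)

lemma ip_neg: "ip g (\<lambda>m. y m - z m) = - ip g (\<lambda>m. z m - y m)"
  unfolding ip_def by (simp add: sum_negf[symmetric] algebra_simps)

abbreviation "K1 \<equiv> p * real (L + tmax)"

lemma fold_gap:
  assumes "distinct bs" "set bs \<subseteq> S"
  shows "(\<Sum>b\<in>set bs. ip (G (foldl upd x bs) b) (\<lambda>m. blk (foldl upd x bs) b m - blk y b m)
            + \<rho> * (nrm (blk (foldl upd x bs) b) - nrm (blk y b)))
     \<le> (\<Sum>b\<in>set bs. \<Sum>m<M. K1 * (\<Sum>b'\<in>S. cmod (blk (foldl upd x bs) b' m - blk x b' m))
            * cmod (blk (foldl upd x bs) b m - blk y b m))"
  using assms
proof (induction bs arbitrary: x)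
  case Nil then show ?case by simp
next
  case (Cons b bs)
  define x1 where "x1 = upd x b"
  define z where "z = foldl upd x1 bs"
  have bS: "b \<in> S" and nb: "b \<notin> set bs" using Cons.prems by auto
  have zb: "blk z b = blk x1 b" unfolding z_def using nb by (rule fold_other_blk)
  have mono: "cmod (blk z b' m - blk x1 b' m) \<le> cmod (blk z b' m - blk x b' m)" for b' m
    by (cases "b' = b") (auto simp: zb x1_def upd_other)
  have monoS: "K1 * (\<Sum>b'\<in>S. cmod (blk z b' m - blk x1 b' m)) * cmod (blk z b'' m - blk y b'' m)
     \<le> K1 * (\<Sum>b'\<in>S. cmod (blk z b' m - blk x b' m)) * cmod (blk z b'' m - blk y b'' m)" for m b''
    using pp by (intro mult_right_mono mult_left_mono sum_mono mono) auto
  have IH: "(\<Sum>b\<in>set bs. ip (G z b) (\<lambda>m. blk z b m - blk y b m) + \<rho> * (nrm (blk z b) - nrm (blk y b)))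
     \<le> (\<Sum>b\<in>set bs. \<Sum>m<M. K1 * (\<Sum>b'\<in>S. cmod (blk z b' m - blk x1 b' m)) * cmod (blk z b m - blk y b m))"
    unfolding z_def using Cons by auto
  also have "\<dots> \<le> (\<Sum>b\<in>set bs. \<Sum>m<M. K1 * (\<Sum>b'\<in>S. cmod (blk z b' m - blk x b' m)) * cmod (blk z b m - blk y b m))"
    by (intro sum_mono monoS)
  finally have tail: "(\<Sum>b\<in>set bs. ip (G z b) (\<lambda>m. blk z b m - blk y b m) + \<rho> * (nrm (blk z b) - nrm (blk y b)))
     \<le> (\<Sum>b\<in>set bs. \<Sum>m<M. K1 * (\<Sum>b'\<in>S. cmod (blk z b' m - blk x b' m)) * cmod (blk z b m - blk y b m))" .
  have f: "ip (G x1 b) (\<lambda>m. blk y b m - blk z b m) + \<rho> * (nrm (blk y b) - nrm (blk z b)) \<ge> 0"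
    using foc[OF bS, of x "blk y b"] unfolding zb x1_def .
  have "ip (G z b) (\<lambda>m. blk z b m - blk y b m) + \<rho> * (nrm (blk z b) - nrm (blk y b))
     \<le> ip (G z b) (\<lambda>m. blk z b m - blk y b m) + ip (G x1 b) (\<lambda>m. blk y b m - blk z b m)"
    using f by (simp add: right_diff_distrib)
  also have "\<dots> = (\<Sum>m<M. Re (cnj (G z b m - G x1 b m) * (blk z b m - blk y b m)))" by (rule ip_comb)
  also have "\<dots> \<le> (\<Sum>m<M. cmod (G z b m - G x1 b m) * cmod (blk z b m - blk y b m))"
    by (intro sum_mono) (metis complex_Re_le_cmod complex_mod_cnj norm_mult)
  also have "\<dots> \<le> (\<Sum>m<M. K1 * (\<Sum>b'\<in>S. cmod (blk z b' m - blk x1 b' m)) * cmod (blk z b m - blk y b m))"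
    by (intro sum_mono mult_right_mono G_diff[OF bS]) auto
  also have "\<dots> \<le> (\<Sum>m<M. K1 * (\<Sum>b'\<in>S. cmod (blk z b' m - blk x b' m)) * cmod (blk z b m - blk y b m))"
    by (intro sum_mono monoS)
  finally have head: "ip (G z b) (\<lambda>m. blk z b m - blk y b m) + \<rho> * (nrm (blk z b) - nrm (blk y b))
     \<le> (\<Sum>m<M. K1 * (\<Sum>b'\<in>S. cmod (blk z b' m - blk x b' m)) * cmod (blk z b m - blk y b m))" .
  have "foldl upd x (b # bs) = z" by (simp add: z_def x1_def)
  then show ?case using head tail nb by simp
qed


lemma blocks_ok: "distinct (blocks N tmax)" "set (blocks N tmax) = S"
proof -
  have e: "blocks N tmax = List.product [0..<N] [0..<Suc tmax]"
    unfolding blocks_def product_concat_map by simp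
  show "distinct (blocks N tmax)" unfolding e by (simp add: distinct_product)
  show "set (blocks N tmax) = S" unfolding e S_def by auto
qed

definition "oi x = outer_iter N L M tmax p \<rho> Y a x"

lemma oi_fold: "oi x = foldl upd x (blocks N tmax)"
  unfolding oi_def outer_iter_def upd_def ..

lemma outer_dec: "PP x - PP (oi x) \<ge> (p * real L / 2) *
     (\<Sum>b\<in>S. \<Sum>m<M. (cmod (blk (oi x) b m - blk x b m))\<^sup>2)"
  using fold_dec[OF blocks_ok(1), of x] blocks_ok(2) unfolding oi_fold by simp

lemma outer_gap: "PP (oi x) - PP y \<le> (\<Sum>b\<in>S. \<Sum>m<M. K1 * (\<Sum>b'\<in>S. cmod (blk (oi x) b' m - blk x b' m))
            * cmod (blk (oi x) b m - blk y b m))"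
proof -
  define z where "z = oi x"
  have fg: "(\<Sum>b\<in>S. ip (G z b) (\<lambda>m. blk z b m - blk y b m) + \<rho> * (nrm (blk z b) - nrm (blk y b)))
     \<le> (\<Sum>b\<in>S. \<Sum>m<M. K1 * (\<Sum>b'\<in>S. cmod (blk z b' m - blk x b' m)) * cmod (blk z b m - blk y b m))"
    using fold_gap[OF blocks_ok(1), of x y] blocks_ok(2) unfolding z_def oi_fold by simp
  have "ff y \<ge> ff z + (\<Sum>b\<in>S. ip (G z b) (\<lambda>m. blk y b m - blk z b m))"
    using f_expand[of y z] Q_nonneg[of z y] by linarith
  then have "ff z - ff y \<le> (\<Sum>b\<in>S. ip (G z b) (\<lambda>m. blk z b m - blk y b m))"
    by (simp add: ip_neg[of _ "blk y _"] sum_negf)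
  moreover have "gg z - gg y = (\<Sum>b\<in>S. \<rho> * (nrm (blk z b) - nrm (blk y b)))"
    by (simp add: gg_def sum_subtractf sum_distrib_left right_diff_distrib)
  ultimately have "PP z - PP y \<le> (\<Sum>b\<in>S. ip (G z b) (\<lambda>m. blk z b m - blk y b m) + \<rho> * (nrm (blk z b) - nrm (blk y b)))"
    unfolding PP_eq by (simp add: sum.distrib)
  then show ?thesis using fg unfolding z_def by linarith
qed

lemma ff_nonneg: "ff x \<ge> 0" by (simp add: ff_def sum_nonneg)
lemma gg_nonneg: "gg x \<ge> 0" using rp by (simp add: gg_def sum_nonneg nrm_nonneg)
lemma PP_nonneg: "PP x \<ge> 0" using ff_nonneg gg_nonneg PP_eq by simp

lemma entry_bound: assumes "b \<in> S" "m < M" shows "\<rho> * cmod (blk x b m) \<le> PP x"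
proof -
  have "cmod (blk x b m) = sqrt ((cmod (blk x b m))\<^sup>2)" by simp
  also have "\<dots> \<le> nrm (blk x b)" unfolding nrm_def using assms
    by (intro real_sqrt_le_mono member_le_sum) auto
  also have "\<dots> \<le> (\<Sum>b'\<in>S. nrm (blk x b'))" using assms finS
    by (intro member_le_sum) (auto simp: nrm_nonneg)
  finally have "\<rho> * cmod (blk x b m) \<le> gg x" unfolding gg_def using rp by (intro mult_left_mono) auto
  then show ?thesis using PP_eq[of x] ff_nonneg[of x] by linarith
qed

lemma E_bound:
  fixes d :: "nat \<times> nat \<Rightarrow> nat \<Rightarrow> real"
  shows "(\<Sum>b\<in>S. \<Sum>m<M. \<bar>d b m\<bar>)\<^sup>2 \<le> real (card S * M) * (\<Sum>b\<in>S. \<Sum>m<M. (d b m)\<^sup>2)"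
proof -
  let ?A = "S \<times> {..<M}"
  have "(\<Sum>b\<in>S. \<Sum>m<M. \<bar>d b m\<bar>) = (\<Sum>q\<in>?A. \<bar>(case_prod d) q\<bar> * \<bar>1\<bar>)"
    by (simp add: sum.cartesian_product case_prod_beta)
  also have "\<dots> \<le> L2_set (case_prod d) ?A * L2_set (\<lambda>_. 1::real) ?A" by (rule L2_set_mult_ineq)
  finally have h: "(\<Sum>b\<in>S. \<Sum>m<M. \<bar>d b m\<bar>) \<le> L2_set (case_prod d) ?A * L2_set (\<lambda>_. 1::real) ?A" .
  have h0: "0 \<le> (\<Sum>b\<in>S. \<Sum>m<M. \<bar>d b m\<bar>)" by (simp add: sum_nonneg)
  have "(\<Sum>b\<in>S. \<Sum>m<M. \<bar>d b m\<bar>)\<^sup>2 \<le> (L2_set (case_prod d) ?A * L2_set (\<lambda>_. 1::real) ?A)\<^sup>2"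
    using h h0 by (intro power_mono) auto
  also have "\<dots> = (\<Sum>q\<in>?A. (case_prod d q)\<^sup>2) * real (card ?A)"
    unfolding L2_set_def by (simp add: power_mult_distrib sum_nonneg)
  also have "\<dots> = real (card S * M) * (\<Sum>b\<in>S. \<Sum>m<M. (d b m)\<^sup>2)"
    by (simp add: sum.cartesian_product card_cartesian_product case_prod_beta)
  finally show ?thesis .
qed


lemma gap_num:
  assumes bd: "\<And>b m. b \<in> S \<Longrightarrow> m < M \<Longrightarrow> cmod (blk (oi x) b m) \<le> B \<and> cmod (blk y b m) \<le> B"
  shows "PP (oi x) - PP y \<le> (2 * B * K1 * real (card S)) * (\<Sum>b\<in>S. \<Sum>m<M. cmod (blk (oi x) b m - blk x b m))"
proof -
  define d where "d b' m = cmod (blk (oi x) b' m - blk x b' m)" for b' m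
  have K0: "K1 \<ge> 0" using pp by simp
  have "PP (oi x) - PP y \<le> (\<Sum>b\<in>S. \<Sum>m<M. K1 * (\<Sum>b'\<in>S. d b' m) * cmod (blk (oi x) b m - blk y b m))"
    using outer_gap[of x y] unfolding d_def .
  also have "\<dots> \<le> (\<Sum>b\<in>S. \<Sum>m<M. K1 * (\<Sum>b'\<in>S. d b' m) * (2 * B))"
  proof (intro sum_mono mult_left_mono)
    fix b m assume "b \<in> S" "m \<in> {..<M}"
    then have "cmod (blk (oi x) b m) \<le> B" "cmod (blk y b m) \<le> B" using bd by auto
    then show "cmod (blk (oi x) b m - blk y b m) \<le> 2 * B" using norm_triangle_ineq4[of "blk (oi x) b m" "blk y b m"] by linarith
    show "0 \<le> K1 * (\<Sum>b'\<in>S. d b' m)" using K0 by (simp add: d_def sum_nonneg)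
  qed
  also have "\<dots> = real (card S) * (2 * B * K1) * (\<Sum>m<M. \<Sum>b'\<in>S. d b' m)"
    by (simp add: sum_distrib_left sum_distrib_right mult_ac)
  also have "(\<Sum>m<M. \<Sum>b'\<in>S. d b' m) = (\<Sum>b'\<in>S. \<Sum>m<M. d b' m)" by (rule sum.swap)
  finally show ?thesis unfolding d_def by (simp add: mult_ac)
qed

lemma convergence:
  defines "a0 \<equiv> \<lambda>k. PP ((outer_iter N L M tmax p \<rho> Y a ^^ k) (\<lambda>_ _ _. 0)) - (INF x. PP x)"
  shows "\<exists>W>0. W \<ge> a0 0 \<and> (\<forall>k. a0 k \<le> W / (real k + 1))"
proof -
  define zz where "zz k = (outer_iter N L M tmax p \<rho> Y a ^^ k) (\<lambda>_ _ _. 0)" for k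
  define Gs where "Gs = (INF x. PP x)"
  have zS: "zz (Suc k) = oi (zz k)" for k by (simp add: zz_def oi_def)
  have aeq: "a0 k = PP (zz k) - Gs" for k by (simp add: a0_def zz_def Gs_def)
  define Phi0 where "Phi0 = PP (zz 0)"
  define E where "E k = (\<Sum>b\<in>S. \<Sum>m<M. cmod (blk (zz (Suc k)) b m - blk (zz k) b m))" for k
  define Dq where "Dq k = (\<Sum>b\<in>S. \<Sum>m<M. (cmod (blk (zz (Suc k)) b m - blk (zz k) b m))\<^sup>2)" for k
  have Dq0: "Dq k \<ge> 0" for k by (simp add: Dq_def sum_nonneg)
  have E0: "E k \<ge> 0" for k by (simp add: E_def sum_nonneg)
  have dec: "PP (zz k) - PP (zz (Suc k)) \<ge> (p * real L / 2) * Dq k" for k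
    using outer_dec[of "zz k"] unfolding zS Dq_def .
  have decp: "(p * real L / 2) * Dq k \<ge> 0" for k using pp Dq0[of k] by simp
  have mono: "PP (zz k) \<le> Phi0" for k
  proof (induction k)
    case 0 then show ?case by (simp add: Phi0_def)
  next
    case (Suc k) then show ?case using dec[of k] decp[of k] by linarith
  qed
  have bdd: "bdd_below (range PP)" using PP_nonneg by (intro bdd_belowI) auto
  have Gle: "Gs \<le> PP x" for x unfolding Gs_def using bdd by (rule cINF_lower) simp
  have a_nn: "a0 k \<ge> 0" for k using Gle[of "zz k"] by (simp add: aeq)
  define B where "B = Phi0 / \<rho> + 1"
  have ebd: "PP x \<le> Phi0 \<Longrightarrow> b \<in> S \<Longrightarrow> m < M \<Longrightarrow> cmod (blk x b m) \<le> B" for x b m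
  proof -
    assume h: "PP x \<le> Phi0" "b \<in> S" "m < M"
    have "\<rho> * cmod (blk x b m) \<le> Phi0" using entry_bound[OF h(2,3), of x] h(1) by linarith
    then have "cmod (blk x b m) \<le> Phi0 / \<rho>" using rp by (simp add: field_simps mult.commute)
    then show ?thesis unfolding B_def by linarith
  qed
  have Phi0nn: "Phi0 \<ge> 0" unfolding Phi0_def by (rule PP_nonneg)
  have Bpos: "B > 0" unfolding B_def using Phi0nn rp by (simp add: add_nonneg_pos)
  have "(0, 0) \<in> S" using N1 by (simp add: S_def)
  then have cS: "card S > 0" using finS by (subst card_gt_0_iff) auto
  define Kg where "Kg = 2 * B * K1 * real (card S)"
  have Kgpos: "Kg > 0" unfolding Kg_def using Bpos pp cS L1 by (intro mult_pos_pos) auto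
  have gapE: "a0 (Suc k) \<le> Kg * E k" for k
  proof -
    have "PP (zz (Suc k)) - Kg * E k \<le> Gs" unfolding Gs_def
    proof (rule cINF_greatest)
      show "UNIV \<noteq> {}" by simp
      fix y
      show "PP (zz (Suc k)) - Kg * E k \<le> PP y"
      proof (cases "PP y \<le> Phi0")
        case True
        have "PP (oi (zz k)) - PP y \<le> Kg * E k"
          unfolding Kg_def E_def zS[symmetric]
          by (rule gap_num[of "zz k" B y, unfolded zS[symmetric]]) (use ebd mono True in blast)
        then show ?thesis unfolding zS by linarith
      next
        case False
        then show ?thesis using mono[of "Suc k"] Kgpos E0[of k] by (smt (verit) mult_nonneg_nonneg)
      qed
    qed
    then show ?thesis by (simp add: aeq)
  qed
  define q where "q = (p * real L / 2) / (real (card S * M) * Kg\<^sup>2)"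
  have cSM: "real (card S * M) > 0" using cS M1 by simp
  have qpos: "q > 0" unfolding q_def using pp L1 cSM Kgpos by simp
  have qX: "q * (real (card S * M) * Kg\<^sup>2) = p * real L / 2"
  proof -
    have "real (card S * M) * Kg\<^sup>2 \<noteq> 0" using cS M1 Kgpos by simp
    then show ?thesis using q_def nonzero_eq_divide_eq by blast
  qed
  have step: "a0 k - a0 (Suc k) \<ge> q * (a0 (Suc k))\<^sup>2" for k
  proof -
    have "(a0 (Suc k))\<^sup>2 \<le> (Kg * E k)\<^sup>2" using gapE[of k] a_nn[of "Suc k"] by (intro power_mono) auto
    also have "\<dots> = Kg\<^sup>2 * (E k)\<^sup>2" by (simp add: power_mult_distrib)
    also have "\<dots> \<le> Kg\<^sup>2 * (real (card S * M) * Dq k)"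
    proof (intro mult_left_mono)
      show "(E k)\<^sup>2 \<le> real (card S * M) * Dq k"
        using E_bound[of "\<lambda>b m. cmod (blk (zz (Suc k)) b m - blk (zz k) b m)"] unfolding E_def Dq_def by simp
    qed simp
    finally have h: "(a0 (Suc k))\<^sup>2 \<le> Kg\<^sup>2 * (real (card S * M) * Dq k)" .
    have "q * (a0 (Suc k))\<^sup>2 \<le> q * (Kg\<^sup>2 * (real (card S * M) * Dq k))"
      using h qpos by (intro mult_left_mono) auto
    also have "\<dots> = (q * (real (card S * M) * Kg\<^sup>2)) * Dq k" by (simp add: mult_ac)
    also have "\<dots> = (p * real L / 2) * Dq k" using qX by simp
    also have "\<dots> \<le> a0 k - a0 (Suc k)" using dec[of k] by (simp add: aeq)
    finally show ?thesis .
  qed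
  have rate: "a0 k \<le> max (a0 0) (2 / q) / (real k + 1)" for k
    by (rule rec_rate[where a=a0, OF a_nn qpos step])
  show ?thesis
    by (rule exI[of _ "max (a0 0) (2 / q)"]) (use rate qpos in \<open>auto simp: less_max_iff_disj\<close>)
qed

end
theorem theorem3:
  fixes N L M tmax :: nat and p \<rho> :: real
    and Y a :: "nat \<Rightarrow> nat \<Rightarrow> complex"
  assumes "N \<ge> 1" "L \<ge> 1" "M \<ge> 1" "tmax \<ge> 1" "p > 0" "\<rho> > 0"
    and "\<And>n l. n < N \<Longrightarrow> l < L \<Longrightarrow> cmod (a n l) = 1"
  shows "\<exists>C>0. \<forall>\<epsilon>>0. \<exists>t.
           Gamma N L M tmax p \<rho> Y a t - Gamma_opt N L M tmax p \<rho> Y a \<le> \<epsilon> \<and>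
           real (total_ops N L M tmax t) \<le> C * real ((L + tmax) * tmax * M * N) / \<epsilon>"
proof -
  interpret bcd N L M tmax p \<rho> Y a using assms by unfold_locales auto
  define g where "g t = Gamma N L M tmax p \<rho> Y a t - Gamma_opt N L M tmax p \<rho> Y a" for t
  have geq: "g = (\<lambda>k. PP ((outer_iter N L M tmax p \<rho> Y a ^^ k) (\<lambda>_ _ _. 0)) - (INF x. PP x))"
    by (simp add: g_def fun_eq_iff Gamma_def iterate_def Gamma_opt_def PP_def)
  have "\<exists>W>0. W \<ge> g 0 \<and> (\<forall>k. g k \<le> W / (real k + 1))"
    unfolding geq by (rule convergence)
  then obtain W where W: "W > 0" "W \<ge> g 0" "\<And>k. g k \<le> W / (real k + 1)"
    by blast
  define K where "K = real ((L + tmax) * tmax * M * N)"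
  have Kpos: "K > 0" unfolding K_def using assms by simp
  have ops: "real (total_ops N L M tmax t) \<le> real t * (2 * K)" for t
  proof -
    have "real (total_ops N L M tmax t) = real t * ((real tmax + 1) * real ((L + tmax) * M * N))"
      by (simp add: total_ops_def block_update_ops_def algebra_simps)
    also have "\<dots> \<le> real t * ((2 * real tmax) * real ((L + tmax) * M * N))"
      using assms by (intro mult_left_mono mult_right_mono) auto
    also have "\<dots> = real t * (2 * K)" by (simp add: K_def algebra_simps)
    finally show ?thesis .
  qed
  show ?thesis
  proof (intro exI[of _ "4 * W"] conjI allI impI)
    show "4 * W > 0" using W by simp
    fix \<epsilon> :: real assume e: "\<epsilon> > 0"
    show "\<exists>t. Gamma N L M tmax p \<rho> Y a t - Gamma_opt N L M tmax p \<rho> Y a \<le> \<epsilon> \<and>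
           real (total_ops N L M tmax t) \<le> 4 * W * real ((L + tmax) * tmax * M * N) / \<epsilon>"
    proof (cases "g 0 \<le> \<epsilon>")
      case True
      have "0 \<le> 4 * W * K / \<epsilon>" using W Kpos e by simp
      then show ?thesis using True unfolding g_def K_def
        by (intro exI[of _ 0]) (simp add: total_ops_def)
    next
      case False
      define t where "t = nat \<lceil>W / \<epsilon>\<rceil>"
      have Wge: "W / \<epsilon> > 1" using False W e by (simp add: field_simps)
      have t1: "real t \<ge> W / \<epsilon>" unfolding t_def by linarith
      have t2: "real t \<le> W / \<epsilon> + 1" unfolding t_def using Wge by linarith
      have "W \<le> \<epsilon> * real t" using t1 e by (simp add: field_simps)
      then have "W / (real t + 1) \<le> \<epsilon>" using e by (simp add: field_simps)
      then have gt: "g t \<le> \<epsilon>" using W(3)[of t] by linarith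
      have "real t \<le> 2 * (W / \<epsilon>)" using t2 Wge by linarith
      then have "real t * (2 * K) \<le> 2 * (W / \<epsilon>) * (2 * K)" using Kpos by (intro mult_right_mono) auto
      also have "\<dots> = 4 * W * K / \<epsilon>" by simp
      finally have "real (total_ops N L M tmax t) \<le> 4 * W * K / \<epsilon>" using ops[of t] by linarith
      then show ?thesis using gt unfolding g_def K_def by blast
    qed
  qed
qed

end
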